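(* Let $\mathfrak g$ be of type $A_n$, $b\in\mathcal B(\infty)$, and let $i\ne j$ in $I$. Let $m=m_i(b)$ (so $1\le m\le n+1-i$) and $m^\ast=m_j^\ast(b)$ (so $1\le m^\ast\le j$); below $\Sigma_t$ refers to index $i$ and $\Sigma^\ast_s$ to index $j$. If $i>j$, then $\Sigma^\ast_s(\widetilde f_i(b))=\Sigma^\ast_s(b)$ for $1\le s\le j$ and $\Sigma_t(\widetilde f_j^\ast(b))=\Sigma_t(b)$ for $1\le t\le n+1-i$. If $i<j$, then for $1\le s\le j$, $\Sigma^\ast_s(\widetilde f_i(b))=\Sigma^\ast_s(b)-1$ if $m=j-i$ and $s=m$; $=\Sigma^\ast_s(b)+1$ if $m=j-i+1$ and $s=m$; $=\Sigma^\ast_s(b)$ otherwise; and for $1\le t\le n+1-i$, $\Sigma_t(\widetilde f_j^\ast(b))=\Sigma_t(b)-1$ if $m^\ast=j-i$ and $t=m^\ast$; $=\Sigma_t(b)+1$ if $m^\ast=j-i+1$ and $t=m^\ast$; $=\Sigma_t(b)$ otherwise.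
   Context: $I=\{1,\dots,n\}$. $\mathcal I=\{(s,t)\in\mathbb Z_{>0}\times I:s+t\le n+1\}$; $\mathcal B(\infty)$ is the set of $b=(b_{s,t})_{(s,t)\in\mathcal I}\in\mathbb Z_{\ge0}^{\mathcal I}$ with $b_{1,k}\ge b_{2,k-1}\ge\dots\ge b_{k,1}$ for $1\le k\le n$. Convention: $b_{s,t}=0$, $\mathbf e_{s,t}=0$ for $(s,t)\notin\mathcal I$. $\partial_{s,t}(b)=b_{s,t}-b_{s,t+1}-b_{s+1,t-1}+b_{s+1,t}$, $\partial^\ast_{s,t}(b)=b_{s-1,t}-b_{s-1,t+1}-b_{s,t-1}+b_{s,t}$. For an index $i$ and $1\le k\le n+1-i$: $\Sigma_k(b)=\sum_{s=k}^{n+1-i}\partial_{s,i}(b)$, $m_i(b)$ the smallest $k$ maximizing $\Sigma_k(b)$, $\widetilde f_i(b)=b+\mathbf e_{m_i(b),i}$. For an index $j$ and $1\le k\le j$: $\Sigma^\ast_k(b)=\sum_{t=1}^k\partial^\ast_{t,j+1-t}(b)$, $m_j^\ast(b)$ the smallest $k$ maximizing $\Sigma^\ast_k(b)$, $\widetilde f_j^\ast(b)=b+\sum_{t=1}^{m_j^\ast(b)}(\mathbf e_{t,j+1-t}-\mathbf e_{t-1,j+1-t})$. *)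

theory Defs
  imports Main
begin

definition Iset :: "nat \<Rightarrow> (nat \<times> nat) set" where
  "Iset n = {(s,t). 1 \<le> s \<and> 1 \<le> t \<and> t \<le> n \<and> s + t \<le> n + 1}"

definition Binf :: "nat \<Rightarrow> (nat \<Rightarrow> nat \<Rightarrow> int) set" where
  "Binf n = {b. (\<forall>s t. (s,t) \<notin> Iset n \<longrightarrow> b s t = 0)
              \<and> (\<forall>s t. (s,t) \<in> Iset n \<longrightarrow> 0 \<le> b s t)
              \<and> (\<forall>s t. (s,t) \<in> Iset n \<and> 2 \<le> t \<longrightarrow> b (s+1) (t-1) \<le> b s t)}"

definition evec :: "nat \<Rightarrow> nat \<Rightarrow> nat \<Rightarrow> nat \<Rightarrow> nat \<Rightarrow> int" where
  "evec n u v = (\<lambda>s t. if (s,t) = (u,v) \<and> (u,v) \<in> Iset n then 1 else 0)"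

definition pd :: "(nat \<Rightarrow> nat \<Rightarrow> int) \<Rightarrow> nat \<Rightarrow> nat \<Rightarrow> int" where
  "pd b s t = b s t - b s (t+1) - b (s+1) (t-1) + b (s+1) t"

definition pds :: "(nat \<Rightarrow> nat \<Rightarrow> int) \<Rightarrow> nat \<Rightarrow> nat \<Rightarrow> int" where
  "pds b s t = b (s-1) t - b (s-1) (t+1) - b s (t-1) + b s t"

definition Sig :: "nat \<Rightarrow> nat \<Rightarrow> (nat \<Rightarrow> nat \<Rightarrow> int) \<Rightarrow> nat \<Rightarrow> int" where
  "Sig n i b k = (\<Sum>s = k..n+1-i. pd b s i)"

definition SigS :: "nat \<Rightarrow> (nat \<Rightarrow> nat \<Rightarrow> int) \<Rightarrow> nat \<Rightarrow> int" where
  "SigS j b k = (\<Sum>t = 1..k. pds b t (j+1-t))"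

definition mi :: "nat \<Rightarrow> nat \<Rightarrow> (nat \<Rightarrow> nat \<Rightarrow> int) \<Rightarrow> nat" where
  "mi n i b = (LEAST k. 1 \<le> k \<and> k \<le> n+1-i \<and>
                (\<forall>k'. 1 \<le> k' \<and> k' \<le> n+1-i \<longrightarrow> Sig n i b k' \<le> Sig n i b k))"

definition mjs :: "nat \<Rightarrow> (nat \<Rightarrow> nat \<Rightarrow> int) \<Rightarrow> nat" where
  "mjs j b = (LEAST k. 1 \<le> k \<and> k \<le> j \<and>
                (\<forall>k'. 1 \<le> k' \<and> k' \<le> j \<longrightarrow> SigS j b k' \<le> SigS j b k))"

definition fi :: "nat \<Rightarrow> nat \<Rightarrow> (nat \<Rightarrow> nat \<Rightarrow> int) \<Rightarrow> nat \<Rightarrow> nat \<Rightarrow> int" where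
  "fi n i b = (\<lambda>s t. b s t + evec n (mi n i b) i s t)"

definition fjs :: "nat \<Rightarrow> nat \<Rightarrow> (nat \<Rightarrow> nat \<Rightarrow> int) \<Rightarrow> nat \<Rightarrow> nat \<Rightarrow> int" where
  "fjs n j b = (\<lambda>s t. b s t +
     (\<Sum>u = 1..mjs j b. evec n u (j+1-u) s t - evec n (u-1) (j+1-u) s t))"

end

theory Submission imports Defs begin

definition Ef :: "nat \<Rightarrow> nat \<Rightarrow> nat \<Rightarrow> nat \<Rightarrow> int" where
  "Ef j M p q = (if 1 \<le> p \<and> p \<le> M \<and> p + q = j + 1 then 1 else 0)
              - (if 1 \<le> p \<and> p + 1 \<le> M \<and> p + q = j then 1 else 0)"

lemma fjs_eq:
  assumes "1 \<le> j" "j \<le> n" "M = mjs j b" "M \<le> j"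
  shows "fjs n j b = (\<lambda>p q. b p q + Ef j M p q)"
proof (intro ext)
  fix p q
  have s1: "(\<Sum>u = 1..M. evec n u (j+1-u) p q) = (\<Sum>u = 1..M. if u = p then (if p + q = j+1 then 1 else 0) else 0)"
  proof (rule sum.cong)
    fix u assume u: "u \<in> {1..M}"
    then have "(u, j+1-u) \<in> Iset n" using assms unfolding Iset_def by auto
    then show "evec n u (j+1-u) p q = (if u = p then (if p + q = j+1 then 1 else 0) else 0)"
      using u assms unfolding evec_def by auto
  qed simp
  have s2: "(\<Sum>u = 1..M. evec n (u-1) (j+1-u) p q) = (\<Sum>u = 1..M. if u = p+1 then (if 1 \<le> p \<and> p + q = j then 1 else 0) else 0)"
  proof (rule sum.cong)
    fix u assume u: "u \<in> {1..M}"
    show "evec n (u-1) (j+1-u) p q = (if u = p+1 then (if 1 \<le> p \<and> p + q = j then 1 else 0) else 0)"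
    proof (cases "2 \<le> u")
      case True
      then have "(u-1, j+1-u) \<in> Iset n" using u assms unfolding Iset_def by auto
      then show ?thesis using u assms True unfolding evec_def by auto
    next
      case False
      then have "(u-1, j+1-u) \<notin> Iset n" using u assms unfolding Iset_def by auto
      then show ?thesis using u assms False unfolding evec_def by auto
    qed
  qed simp
  show "fjs n j b p q = b p q + Ef j M p q"
    unfolding fjs_def Ef_def sum_subtractf s1 s2 assms(3)[symmetric]
    using assms by (auto simp: sum.delta')
qed

lemma pdE:
  assumes "1 \<le> s" "1 \<le> i"
  shows "pd (Ef j M) s i =
     ((if s = j+1-i then (if i \<le> j \<and> j+1-i \<le> M then 1 else 0) else 0)
    - (if s = j-i then (if i < j \<and> j-i+1 \<le> M then 1 else 0) else 0))
   - ((if s = j-i then (if i < j \<and> j-i \<le> M then 1 else 0) else 0)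
    - (if s = j-i-1 then (if i+1 < j \<and> j-i \<le> M then 1 else 0) else 0))
   - ((if s = j+1-i then (if i \<le> j \<and> j+2-i \<le> M then 1 else 0) else 0)
    - (if s = j-i then (if i < j \<and> j-i+2 \<le> M then 1 else 0) else 0))
   + ((if s = j-i then (if i < j \<and> j-i+1 \<le> M then 1 else 0) else 0)
    - (if s = j-i-1 then (if i+1 < j \<and> j-i+1 \<le> M then 1 else 0) else 0))"
proof -
  have e1: "Ef j M s i = (if s = j+1-i then (if i \<le> j \<and> j+1-i \<le> M then 1 else 0) else 0)
    - (if s = j-i then (if i < j \<and> j-i+1 \<le> M then 1 else 0) else 0)"
    using assms unfolding Ef_def by (intro arg_cong2[where f="(-)"]; simp only: split: if_split; arith)
  have e2: "Ef j M s (i+1) = (if s = j-i then (if i < j \<and> j-i \<le> M then 1 else 0) else 0)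
    - (if s = j-i-1 then (if i+1 < j \<and> j-i \<le> M then 1 else 0) else 0)"
    using assms unfolding Ef_def by (intro arg_cong2[where f="(-)"]; simp only: split: if_split; arith)
  have e3: "Ef j M (s+1) (i-1) = (if s = j+1-i then (if i \<le> j \<and> j+2-i \<le> M then 1 else 0) else 0)
    - (if s = j-i then (if i < j \<and> j-i+2 \<le> M then 1 else 0) else 0)"
    using assms unfolding Ef_def by (intro arg_cong2[where f="(-)"]; simp only: split: if_split; arith)
  have e4: "Ef j M (s+1) i = (if s = j-i then (if i < j \<and> j-i+1 \<le> M then 1 else 0) else 0)
    - (if s = j-i-1 then (if i+1 < j \<and> j-i+1 \<le> M then 1 else 0) else 0)"
    using assms unfolding Ef_def by (intro arg_cong2[where f="(-)"]; simp only: split: if_split; arith)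
  show ?thesis unfolding pd_def e1 e2 e3 e4 ..
qed

lemma SigE:
  assumes "1 \<le> i" "i \<le> n" "1 \<le> j" "j \<le> n" "i \<noteq> j" "1 \<le> M" "M \<le> j" "1 \<le> t" "t \<le> n+1-i"
  shows "Sig n i (Ef j M) t =
     (if M = j - i \<and> t = M \<and> i < j then - 1
      else if M = j - i + 1 \<and> t = M \<and> i < j then 1 else 0)"
proof -
  have "Sig n i (Ef j M) t = (\<Sum>s = t..n+1-i.
     ((if s = j+1-i then (if i \<le> j \<and> j+1-i \<le> M then 1 else 0) else 0)
    - (if s = j-i then (if i < j \<and> j-i+1 \<le> M then 1 else 0) else 0))
   - ((if s = j-i then (if i < j \<and> j-i \<le> M then 1 else 0) else 0)
    - (if s = j-i-1 then (if i+1 < j \<and> j-i \<le> M then 1 else 0) else 0))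
   - ((if s = j+1-i then (if i \<le> j \<and> j+2-i \<le> M then 1 else 0) else 0)
    - (if s = j-i then (if i < j \<and> j-i+2 \<le> M then 1 else 0) else 0))
   + ((if s = j-i then (if i < j \<and> j-i+1 \<le> M then 1 else 0) else 0)
    - (if s = j-i-1 then (if i+1 < j \<and> j-i+1 \<le> M then 1 else 0) else 0)))"
    unfolding Sig_def
    apply (rule sum.cong[OF refl])
    apply (rule pdE)
    using assms by auto
  also have "\<dots> = 
     ((if j+1-i \<in> {t..n+1-i} then (if i \<le> j \<and> j+1-i \<le> M then 1 else 0) else 0)
    - (if j-i \<in> {t..n+1-i} then (if i < j \<and> j-i+1 \<le> M then 1 else 0) else 0))
   - ((if j-i \<in> {t..n+1-i} then (if i < j \<and> j-i \<le> M then 1 else 0) else 0)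
    - (if j-i-1 \<in> {t..n+1-i} then (if i+1 < j \<and> j-i \<le> M then 1 else 0) else 0))
   - ((if j+1-i \<in> {t..n+1-i} then (if i \<le> j \<and> j+2-i \<le> M then 1 else 0) else 0)
    - (if j-i \<in> {t..n+1-i} then (if i < j \<and> j-i+2 \<le> M then 1 else 0) else 0))
   + ((if j-i \<in> {t..n+1-i} then (if i < j \<and> j-i+1 \<le> M then 1 else 0) else 0)
    - (if j-i-1 \<in> {t..n+1-i} then (if i+1 < j \<and> j-i+1 \<le> M then 1 else 0) else 0))"
    by (simp only: sum.distrib sum_subtractf sum.delta finite_atLeastAtMost)
  also have "\<dots> = (if M = j - i \<and> t = M \<and> i < j then - 1
      else if M = j - i + 1 \<and> t = M \<and> i < j then 1 else 0)"
  proof (cases "i < j")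
    case True
    define d where "d = j - i"
    have d: "j = i + d" "1 \<le> d" using True unfolding d_def by auto
    have r: "j+1-i = d+1" "j-i = d" "j-i-1 = d-1" "j+2-i = d+2" "n+1-i \<ge> d+1" using d assms by auto
    have m: "(d+1 \<in> {t..n+1-i}) = (t \<le> d+1)" "(d \<in> {t..n+1-i}) = (t \<le> d)"
      "(d-1 \<in> {t..n+1-i}) = (t < d)" "(i+1 < j) = (2 \<le> d)" "i < j" "i \<le> j"
      using r(5) d assms by auto
    have tc: "t < d \<or> t = d \<or> t = d+1 \<or> d+1 < t" by arith
    have mc: "M < d \<or> M = d \<or> M = d+1 \<or> d+1 < M" by arith
    show ?thesis unfolding r(1-4) m(1-4) using tc mc d(2) assms(8) m(5,6)
      apply (elim disjE)
      apply (simp_all split del: if_split)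
      done
  next
    case False
    then have r: "j+1-i = 0" "j-i = 0" "j-i-1 = 0" using assms by auto
    show ?thesis unfolding r using False assms by simp
  qed
  finally show ?thesis .
qed


lemma SigS_add: "SigS j (\<lambda>p q. b p q + e p q) k = SigS j b k + SigS j e k"
  unfolding SigS_def pds_def by (simp add: sum.distrib[symmetric] algebra_simps)

lemma Sig_add: "Sig n i (\<lambda>p q. b p q + e p q) k = Sig n i b k + Sig n i e k"
  unfolding Sig_def pd_def by (simp add: sum.distrib[symmetric] algebra_simps)

lemma least_max:
  fixes f :: "nat \<Rightarrow> int"
  assumes "1 \<le> N"
  shows "1 \<le> (LEAST k. 1 \<le> k \<and> k \<le> N \<and> (\<forall>k'. 1 \<le> k' \<and> k' \<le> N \<longrightarrow> f k' \<le> f k))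
       \<and> (LEAST k. 1 \<le> k \<and> k \<le> N \<and> (\<forall>k'. 1 \<le> k' \<and> k' \<le> N \<longrightarrow> f k' \<le> f k)) \<le> N"
proof -
  have fin: "finite (f ` {1..N})" and ne: "f ` {1..N} \<noteq> {}" using assms by auto
  obtain k where k: "k \<in> {1..N}" "f k = Max (f ` {1..N})"
    using Max_in[OF fin ne] by auto
  have "1 \<le> k \<and> k \<le> N \<and> (\<forall>k'. 1 \<le> k' \<and> k' \<le> N \<longrightarrow> f k' \<le> f k)"
    using k fin by auto
  then show ?thesis by (rule LeastI2_ex[OF exI]) auto
qed

lemma mi_bounds: "i \<le> n \<Longrightarrow> 1 \<le> mi n i b \<and> mi n i b \<le> n+1-i"
  unfolding mi_def by (rule least_max) auto

lemma mjs_bounds: "1 \<le> j \<Longrightarrow> 1 \<le> mjs j b \<and> mjs j b \<le> j"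
  unfolding mjs_def by (rule least_max) auto

lemma part1:
  assumes "1 \<le> m" "m \<le> n+1-i" "1 \<le> i" "i \<le> n" "1 \<le> s" "s \<le> j" "i \<noteq> j"
  shows "SigS j (evec n m i) s =
     (if m = j - i \<and> s = m \<and> i < j then - 1
      else if m = j - i + 1 \<and> s = m \<and> i < j then 1 else 0)"
proof -
  have mi: "(m,i) \<in> Iset n" using assms unfolding Iset_def by auto
  then have ev: "evec n m i = (\<lambda>p q. if p = m \<and> q = i then 1 else 0)"
    unfolding evec_def by (auto intro!: ext)
  have pt: "pds (evec n m i) t (j+1-t) =
     (if t = m+1 then (if j = m+i then 1 else 0) - (if j+1 = m+i then 1 else 0) else 0)
   + (if t = m then (if j+1 = m+i then 1 else 0) - (if j = m + i then 1 else 0) else 0)"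
    if "t \<in> {1..s}" for t
  proof -
    have t: "1 \<le> t" "t \<le> j" using that assms by auto
    have a1: "evec n m i (t-1) (j+1-t) = (if t = m+1 then (if j = m+i then 1 else 0) else 0)"
      using assms t unfolding ev by (simp only: split: if_split; arith)
    have a2: "evec n m i (t-1) (j+1-t+1) = (if t = m+1 then (if j+1 = m+i then 1 else 0) else 0)"
      using assms t unfolding ev by (simp only: split: if_split; arith)
    have a3: "evec n m i t (j+1-t-1) = (if t = m then (if j = m+i then 1 else 0) else 0)"
      using assms t unfolding ev by (simp only: split: if_split; arith)
    have a4: "evec n m i t (j+1-t) = (if t = m then (if j+1 = m+i then 1 else 0) else 0)"
      using assms t unfolding ev by (simp only: split: if_split; arith)
    show ?thesis unfolding pds_def a1 a2 a3 a4 by simp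
  qed
  have "SigS j (evec n m i) s = (\<Sum>t=1..s.
     (if t = m+1 then (if j = m+i then 1 else 0) - (if j+1 = m+i then 1 else 0) else 0)
   + (if t = m then (if j+1 = m+i then 1 else 0) - (if j = m + i then 1 else 0) else 0))"
    unfolding SigS_def by (rule sum.cong[OF refl], rule pt)
  also have "\<dots> = (if m+1 \<in> {1..s} then (if j = m+i then 1 else 0) - (if j+1 = m+i then 1 else 0) else 0)
   + (if m \<in> {1..s} then (if j+1 = m+i then 1 else 0) - (if j = m + i then 1 else 0) else 0)"
    by (simp only: sum.distrib sum.delta finite_atLeastAtMost)
  also have "\<dots> = (if m = j - i \<and> s = m \<and> i < j then - 1
      else if m = j - i + 1 \<and> s = m \<and> i < j then 1 else 0)"
  proof -
    show ?thesis
    proof (cases "i < j")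
      case True
      have e1: "(m = j - i) = (j = m + i)" using assms by arith
      have e2: "(m = j - i + 1) = (j + 1 = m + i)" using assms True by arith
      have c1: "j = m+i \<or> j+1 = m+i \<or> (j \<noteq> m+i \<and> j+1 \<noteq> m+i)" by blast
      have c2: "s < m \<or> s = m \<or> m < s" by arith
      show ?thesis unfolding e1 e2 using c1 c2 True
        apply (elim disjE conjE)
        apply simp_all
        done
    next
      case False
      have "j \<noteq> m + i" "j + 1 \<noteq> m + i" using False assms by arith+
      then show ?thesis using False by simp
    qed
  qed
  finally show ?thesis .
qed

theorem lemma6p10:
  fixes n i j :: nat and b :: "nat \<Rightarrow> nat \<Rightarrow> int"
  assumes "1 \<le> n" and "b \<in> Binf n" and "i \<in> {1..n}" and "j \<in> {1..n}" and "i \<noteq> j"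
  shows "(j < i \<longrightarrow>
            (\<forall>s\<in>{1..j}. SigS j (fi n i b) s = SigS j b s) \<and>
            (\<forall>t\<in>{1..n+1-i}. Sig n i (fjs n j b) t = Sig n i b t))
       \<and> (i < j \<longrightarrow>
            (\<forall>s\<in>{1..j}. SigS j (fi n i b) s =
               (if mi n i b = j - i \<and> s = mi n i b then SigS j b s - 1
                else if mi n i b = j - i + 1 \<and> s = mi n i b then SigS j b s + 1
                else SigS j b s)) \<and>
            (\<forall>t\<in>{1..n+1-i}. Sig n i (fjs n j b) t =
               (if mjs j b = j - i \<and> t = mjs j b then Sig n i b t - 1
                else if mjs j b = j - i + 1 \<and> t = mjs j b then Sig n i b t + 1
                else Sig n i b t)))"
proof -
  have ij: "1 \<le> i" "i \<le> n" "1 \<le> j" "j \<le> n" using assms by auto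
  have m: "1 \<le> mi n i b" "mi n i b \<le> n+1-i" using mi_bounds[OF ij(2)] by auto
  have M: "1 \<le> mjs j b" "mjs j b \<le> j" using mjs_bounds[OF ij(3)] by auto
  have A: "SigS j (fi n i b) s = SigS j b s +
     (if mi n i b = j - i \<and> s = mi n i b \<and> i < j then - 1
      else if mi n i b = j - i + 1 \<and> s = mi n i b \<and> i < j then 1 else 0)"
    if "s \<in> {1..j}" for s
    unfolding fi_def SigS_add using part1[OF m ij(1,2) _ _ assms(5)] that by simp
  have B: "Sig n i (fjs n j b) t = Sig n i b t +
     (if mjs j b = j - i \<and> t = mjs j b \<and> i < j then - 1
      else if mjs j b = j - i + 1 \<and> t = mjs j b \<and> i < j then 1 else 0)"
    if "t \<in> {1..n+1-i}" for t
    unfolding fjs_eq[OF ij(3,4) refl M(2)] Sig_add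
    using SigE[OF ij assms(5) M] that by simp
  show ?thesis
  proof (intro conjI impI ballI)
    fix s assume "j < i" "s \<in> {1..j}"
    then show "SigS j (fi n i b) s = SigS j b s" using A[of s] by simp
  next
    fix t assume "j < i" "t \<in> {1..n+1-i}"
    then show "Sig n i (fjs n j b) t = Sig n i b t" using B[of t] by simp
  next
    fix s assume "i < j" "s \<in> {1..j}"
    then show "SigS j (fi n i b) s =
               (if mi n i b = j - i \<and> s = mi n i b then SigS j b s - 1
                else if mi n i b = j - i + 1 \<and> s = mi n i b then SigS j b s + 1
                else SigS j b s)" using A[of s]
      by (cases "mi n i b = j - i \<and> s = mi n i b"; cases "mi n i b = j - i + 1 \<and> s = mi n i b"; simp)
  next
    fix t assume "i < j" "t \<in> {1..n+1-i}"
    then show "Sig n i (fjs n j b) t =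
               (if mjs j b = j - i \<and> t = mjs j b then Sig n i b t - 1
                else if mjs j b = j - i + 1 \<and> t = mjs j b then Sig n i b t + 1
                else Sig n i b t)" using B[of t]
      by (cases "mjs j b = j - i \<and> t = mjs j b"; cases "mjs j b = j - i + 1 \<and> t = mjs j b"; simp)
  qed
qed

end
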